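(* Let $\mathbb{K}$ be a field of characteristic zero, $p,q\in\mathbb{Z}^n_{\ge0}$ and $\beta,\gamma\in\mathbb{K}^n$. For any integer $d\ge1$, $$(\mathrm{ad}\,\Delta^q_\gamma)^d(\Delta^p_\beta)=s_d\,\Delta^{p+dq}_{\omega_d},$$ where $s_1=1$, $s_d=\prod_{i=0}^{d-2}\langle\gamma,p+iq\rangle$ for $d>1$, and $\omega_d=\langle\gamma,p+(d-1)q\rangle\beta-d\langle\beta,q\rangle\gamma$.
   Context: For $p\in\mathbb{Z}^n_{\ge0}$ and $\beta\in\mathbb{K}^n$, $\Delta^p_\beta:=x_1^{p_1}\cdots x_n^{p_n}\sum_{j=1}^n\beta_jx_j\partial_j$ (a derivation of $\mathbb{K}[x_1,\ldots,x_n]$, $\partial_j=\partial/\partial x_j$). $\langle\beta,u\rangle:=\sum_i\beta_iu_i$. $(\mathrm{ad}\,X)(Y)=[X,Y]=X\circ Y-Y\circ X$. *)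

theory Defs
  imports Main "HOL-Library.Poly_Mapping"
begin

text \<open>Polynomials in the variables x_j (j ranging over a finite index type 'n, i.e. n variables)
  with coefficients in 'a: finitely supported maps from exponent vectors ('n =>0 nat) to 'a.\<close>

type_synonym ('n, 'a) mpoly = "('n \<Rightarrow>\<^sub>0 nat) \<Rightarrow>\<^sub>0 'a"

definition const_mp :: "'a::zero \<Rightarrow> ('n, 'a) mpoly" where
  "const_mp c = Poly_Mapping.single 0 c"

definition xmon :: "('n \<Rightarrow>\<^sub>0 nat) \<Rightarrow> ('n, 'a::{zero,one}) mpoly" where
  "xmon u = Poly_Mapping.single u 1"

definition xvar :: "'n \<Rightarrow> ('n, 'a::{zero,one}) mpoly" where
  "xvar j = xmon (Poly_Mapping.single j 1)"

definition pdiff :: "'n \<Rightarrow> ('n, 'a::semiring_1) mpoly \<Rightarrow> ('n, 'a) mpoly" where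
  "pdiff j f = (\<Sum>u\<in>Poly_Mapping.keys f.
      Poly_Mapping.single (u - Poly_Mapping.single j (1::nat))
        (of_nat (Poly_Mapping.lookup u j) * Poly_Mapping.lookup f u))"

definition Delta :: "('n::finite \<Rightarrow>\<^sub>0 nat) \<Rightarrow> ('n \<Rightarrow> 'a::comm_semiring_1)
    \<Rightarrow> ('n, 'a) mpoly \<Rightarrow> ('n, 'a) mpoly" where
  "Delta p \<beta> f = xmon p * (\<Sum>j\<in>UNIV. const_mp (\<beta> j) * (xvar j * pdiff j f))"

definition pair :: "('n::finite \<Rightarrow> 'a::semiring_1) \<Rightarrow> ('n \<Rightarrow>\<^sub>0 nat) \<Rightarrow> 'a" where
  "pair \<beta> u = (\<Sum>i\<in>UNIV. \<beta> i * of_nat (Poly_Mapping.lookup u i))"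

definition nscale :: "nat \<Rightarrow> ('n \<Rightarrow>\<^sub>0 nat) \<Rightarrow> ('n \<Rightarrow>\<^sub>0 nat)" where
  "nscale d q = Poly_Mapping.map (\<lambda>k. d * k) q"

definition ad :: "('b \<Rightarrow> 'b::ab_group_add) \<Rightarrow> ('b \<Rightarrow> 'b) \<Rightarrow> ('b \<Rightarrow> 'b)" where
  "ad X Y = (\<lambda>f. X (Y f) - Y (X f))"

definition s_coef :: "('n::finite \<Rightarrow> 'a::comm_semiring_1) \<Rightarrow> ('n \<Rightarrow>\<^sub>0 nat) \<Rightarrow> ('n \<Rightarrow>\<^sub>0 nat)
    \<Rightarrow> nat \<Rightarrow> 'a" where
  "s_coef \<gamma> p q d = (if d = 1 then 1 else (\<Prod>i\<in>{0..d-2}. pair \<gamma> (p + nscale i q)))"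

definition omega :: "('n::finite \<Rightarrow> 'a::comm_ring_1) \<Rightarrow> ('n \<Rightarrow> 'a) \<Rightarrow> ('n \<Rightarrow>\<^sub>0 nat)
    \<Rightarrow> ('n \<Rightarrow>\<^sub>0 nat) \<Rightarrow> nat \<Rightarrow> ('n \<Rightarrow> 'a)" where
  "omega \<beta> \<gamma> p q d = (\<lambda>j. pair \<gamma> (p + nscale (d-1) q) * \<beta> j - of_nat d * pair \<beta> q * \<gamma> j)"

end

theory Submission
  imports Defs
begin

definition dle :: "('n \<Rightarrow>\<^sub>0 nat) \<Rightarrow> ('n \<Rightarrow>\<^sub>0 nat) \<Rightarrow> bool" where
  "dle m k = (\<forall>i. Poly_Mapping.lookup m i \<le> Poly_Mapping.lookup k i)"

lemma lookup_nscale: "Poly_Mapping.lookup (nscale d q) i = d * Poly_Mapping.lookup q i"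
  by (simp add: nscale_def map.rep_eq when_def)

lemma dle_eq_iff: "dle m k \<Longrightarrow> (k = m + q) = (q = k - m)"
  unfolding dle_def
  by (auto simp: poly_mapping_eq_iff fun_eq_iff lookup_add lookup_minus)

lemma not_dle_neq: "\<not> dle m k \<Longrightarrow> k \<noteq> m + q"
  unfolding dle_def by (auto simp: lookup_add)

lemma nscale_0: "nscale 0 q = 0"
  by (simp add: poly_mapping_eq_iff fun_eq_iff lookup_nscale)

lemma nscale_1: "nscale 1 q = q" "nscale (Suc 0) q = q"
  by (simp_all add: poly_mapping_eq_iff fun_eq_iff lookup_nscale)

lemma lookup_single_mult:
  fixes m k :: "'n \<Rightarrow>\<^sub>0 nat" and g :: "('n \<Rightarrow>\<^sub>0 nat) \<Rightarrow>\<^sub>0 'a::comm_semiring_1"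
  shows "Poly_Mapping.lookup (Poly_Mapping.single m c * g) k
     = (if dle m k then c * Poly_Mapping.lookup g (k - m) else 0)"
proof -
  have "Poly_Mapping.lookup (Poly_Mapping.single m c * g) k
     = (\<Sum>l. (c when m = l) * (\<Sum>q. Poly_Mapping.lookup g q when k = l + q))"
    by (simp add: lookup_mult lookup_single)
  also have "\<dots> = (\<Sum>l. (c * (\<Sum>q. Poly_Mapping.lookup g q when k = m + q)) when m = l)"
    by (rule Sum_any.cong) (simp add: when_def)
  also have "\<dots> = c * (\<Sum>q. Poly_Mapping.lookup g q when k = m + q)"
    by simp
  also have "\<dots> = (if dle m k then c * Poly_Mapping.lookup g (k - m) else 0)"
  proof (cases "dle m k")
    case True
    then show ?thesis by (simp add: dle_eq_iff)
  next
    case False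
    then show ?thesis by (simp add: not_dle_neq when_def)
  qed
  finally show ?thesis .
qed

lemma lookup_const_mult:
  fixes g :: "('n, 'a::comm_semiring_1) mpoly"
  shows "Poly_Mapping.lookup (const_mp c * g) k = c * Poly_Mapping.lookup g k"
  by (simp add: const_mp_def lookup_single_mult dle_def)

lemma lookup_pdiff:
  fixes f :: "('n, 'a::semiring_1) mpoly"
  shows "Poly_Mapping.lookup (pdiff j f) v
    = of_nat (Poly_Mapping.lookup v j + 1) * Poly_Mapping.lookup f (v + Poly_Mapping.single j 1)"
proof -
  let ?e = "Poly_Mapping.single j (1::nat)"
  have "Poly_Mapping.lookup (pdiff j f) v = (\<Sum>u\<in>Poly_Mapping.keys f.
      (of_nat (Poly_Mapping.lookup u j) * Poly_Mapping.lookup f u) when u - ?e = v)"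
    by (simp add: pdiff_def lookup_sum lookup_single)
  also have "\<dots> = (\<Sum>u\<in>Poly_Mapping.keys f.
      (if u = v + ?e then of_nat (Poly_Mapping.lookup v j + 1) * Poly_Mapping.lookup f (v + ?e) else 0))"
  proof (rule sum.cong)
    fix u assume "u \<in> Poly_Mapping.keys f"
    show "(of_nat (Poly_Mapping.lookup u j) * Poly_Mapping.lookup f u when u - ?e = v)
      = (if u = v + ?e then of_nat (Poly_Mapping.lookup v j + 1) * Poly_Mapping.lookup f (v + ?e) else 0)"
    proof (cases "u = v + ?e")
      case True
      have "u - ?e = v" using True by (simp add: poly_mapping_eq_iff fun_eq_iff lookup_add lookup_minus)
      then show ?thesis using True by (simp add: lookup_add when_def)
    next
      case False
      have "\<not> (u - ?e = v \<and> Poly_Mapping.lookup u j \<noteq> 0)"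
      proof
        assume h: "u - ?e = v \<and> Poly_Mapping.lookup u j \<noteq> 0"
        have "u = v + ?e"
          using h unfolding poly_mapping_eq_iff fun_eq_iff
          apply (auto simp: lookup_add lookup_minus lookup_single when_def)
          subgoal by (drule spec[of _ j]) simp
          subgoal for x by (drule spec[of _ x]) simp
          done
        then show False using False by simp
      qed
      then show ?thesis using False by (auto simp: when_def)
    qed
  qed simp
  also have "\<dots> = of_nat (Poly_Mapping.lookup v j + 1) * Poly_Mapping.lookup f (v + ?e)"
    by (simp add: sum.delta in_keys_iff)
  finally show ?thesis .
qed

lemma lookup_xvar_pdiff:
  fixes f :: "('n, 'a::comm_semiring_1) mpoly"
  shows "Poly_Mapping.lookup (xvar j * pdiff j f) u = of_nat (Poly_Mapping.lookup u j) * Poly_Mapping.lookup f u"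
proof (cases "dle (Poly_Mapping.single j 1) u")
  case True
  have u: "u - Poly_Mapping.single j 1 + Poly_Mapping.single j 1 = u"
    using True unfolding dle_def
    by (auto simp: poly_mapping_eq_iff fun_eq_iff lookup_add lookup_minus)
  have uj: "Poly_Mapping.lookup (u - Poly_Mapping.single j 1) j + 1 = Poly_Mapping.lookup u j"
    using True unfolding dle_def by (auto simp: lookup_minus dest: spec[of _ j])
  have "Poly_Mapping.lookup (xvar j * pdiff j f) u
      = 1 * Poly_Mapping.lookup (pdiff j f) (u - Poly_Mapping.single j 1)"
    unfolding xvar_def xmon_def lookup_single_mult using True by simp
  also have "\<dots> = of_nat (Poly_Mapping.lookup u j) * Poly_Mapping.lookup f u"
    unfolding lookup_pdiff u uj by simp
  finally show ?thesis .
next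
  case False
  then obtain i where i: "\<not> Poly_Mapping.lookup (Poly_Mapping.single j (1::nat)) i \<le> Poly_Mapping.lookup u i"
    unfolding dle_def by auto
  have "i = j" using i by (cases "i = j") (auto simp: lookup_single_not_eq)
  then have "Poly_Mapping.lookup u j = 0" using i by simp
  then show ?thesis using False
    unfolding xvar_def xmon_def lookup_single_mult by simp
qed

lemma lookup_E:
  fixes f :: "('n::finite, 'a::comm_semiring_1) mpoly"
  shows "Poly_Mapping.lookup (\<Sum>j\<in>UNIV. const_mp (\<beta> j) * (xvar j * pdiff j f)) u
     = pair \<beta> u * Poly_Mapping.lookup f u"
  by (simp add: lookup_sum lookup_const_mult lookup_xvar_pdiff pair_def sum_distrib_right mult.assoc)

lemma lookup_Delta:
  "Poly_Mapping.lookup (Delta p \<beta> f) u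
    = (if dle p u then pair \<beta> (u - p) * Poly_Mapping.lookup f (u - p) else 0)"
  by (simp add: Delta_def xmon_def lookup_single_mult lookup_E)

lemma pair_add: "pair \<beta> (a + b) = pair \<beta> a + pair \<beta> b"
  by (simp add: pair_def lookup_add distrib_left sum.distrib)

lemma pair_nscale: "pair \<beta> (nscale d q) = of_nat d * pair \<beta> q"
  for \<beta> :: "'n::finite \<Rightarrow> 'a::comm_semiring_1"
  by (simp add: pair_def lookup_nscale sum_distrib_left mult_ac)

lemma pair_lin: "pair (\<lambda>j. a * \<beta> j - b * \<gamma> j) w = a * pair \<beta> w - b * pair \<gamma> w"
  for \<beta> \<gamma> :: "'n::finite \<Rightarrow> 'a::comm_ring_1"
  by (simp add: pair_def sum_subtractf sum_distrib_left algebra_simps)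

lemma pair_scale: "pair (\<lambda>j. a * \<beta> j) w = a * pair \<beta> w"
  for \<beta> :: "'n::finite \<Rightarrow> 'a::comm_semiring_1"
  by (simp add: pair_def sum_distrib_left algebra_simps)

lemma ad_step:
  fixes p q :: "'n::finite \<Rightarrow>\<^sub>0 nat" and \<beta> \<gamma> :: "'n \<Rightarrow> 'a::comm_ring_1"
  shows "ad (Delta q \<gamma>) (Delta p \<beta>) = Delta (p + q) (\<lambda>j. pair \<gamma> p * \<beta> j - pair \<beta> q * \<gamma> j)"
proof (rule ext, rule poly_mapping_eqI)
  fix f u
  show "Poly_Mapping.lookup (ad (Delta q \<gamma>) (Delta p \<beta>) f) u =
        Poly_Mapping.lookup (Delta (p + q) (\<lambda>j. pair \<gamma> p * \<beta> j - pair \<beta> q * \<gamma> j) f) u"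
  proof (cases "dle (p + q) u")
    case True
    define w where "w = u - (p + q)"
    have u: "u = p + q + w" using True unfolding w_def dle_def
      by (auto simp: poly_mapping_eq_iff fun_eq_iff lookup_add lookup_minus)
    have d1: "dle q u" "dle p (u - q)" "dle p u" "dle q (u - p)"
      unfolding u dle_def by (auto simp: lookup_add lookup_minus)
    have e1: "u - q = p + w" "u - q - p = w" "u - p = q + w" "u - p - q = w" "u - (p+q) = w"
      unfolding u by (auto simp: poly_mapping_eq_iff fun_eq_iff lookup_add lookup_minus)
    have L1: "Poly_Mapping.lookup (Delta q \<gamma> (Delta p \<beta> f)) u
        = pair \<gamma> (p + w) * (pair \<beta> w * Poly_Mapping.lookup f w)"
      using d1(1,2) unfolding lookup_Delta e1(1,2) by simp
    have L2: "Poly_Mapping.lookup (Delta p \<beta> (Delta q \<gamma> f)) u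
        = pair \<beta> (q + w) * (pair \<gamma> w * Poly_Mapping.lookup f w)"
      using d1(3,4) unfolding lookup_Delta e1(3,4) by simp
    have R: "Poly_Mapping.lookup (Delta (p + q) (\<lambda>j. pair \<gamma> p * \<beta> j - pair \<beta> q * \<gamma> j) f) u
        = (pair \<gamma> p * pair \<beta> w - pair \<beta> q * pair \<gamma> w) * Poly_Mapping.lookup f w"
      using True unfolding lookup_Delta e1(5) pair_lin by simp
    have A: "Poly_Mapping.lookup (ad (Delta q \<gamma>) (Delta p \<beta>) f) u
       = Poly_Mapping.lookup (Delta q \<gamma> (Delta p \<beta> f)) u - Poly_Mapping.lookup (Delta p \<beta> (Delta q \<gamma> f)) u"
      by (simp add: ad_def lookup_minus)
    show ?thesis unfolding A L1 L2 R pair_add by (simp add: algebra_simps)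
  next
    case False
    obtain i where i: "\<not> Poly_Mapping.lookup (p + q) i \<le> Poly_Mapping.lookup u i"
      using False unfolding dle_def by auto
    have i2: "\<not> Poly_Mapping.lookup p i + Poly_Mapping.lookup q i \<le> Poly_Mapping.lookup u i"
      using i by (simp add: lookup_add)
    have "\<not> (dle q u \<and> dle p (u - q))"
    proof
      assume h: "dle q u \<and> dle p (u - q)"
      then have "Poly_Mapping.lookup q i \<le> Poly_Mapping.lookup u i"
        "Poly_Mapping.lookup p i \<le> Poly_Mapping.lookup u i - Poly_Mapping.lookup q i"
        unfolding dle_def lookup_minus by auto
      then show False using i2 by linarith
    qed
    moreover have "\<not> (dle p u \<and> dle q (u - p))"
    proof
      assume h: "dle p u \<and> dle q (u - p)"
      then have "Poly_Mapping.lookup p i \<le> Poly_Mapping.lookup u i"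
        "Poly_Mapping.lookup q i \<le> Poly_Mapping.lookup u i - Poly_Mapping.lookup p i"
        unfolding dle_def lookup_minus by auto
      then show False using i2 by linarith
    qed
    ultimately show ?thesis using False
      by (auto simp: ad_def lookup_minus lookup_Delta)
  qed
qed

lemma const_Delta: "const_mp c * Delta p \<beta> f = Delta p (\<lambda>j. c * \<beta> j) f"
  by (rule poly_mapping_eqI) (simp add: lookup_const_mult lookup_Delta pair_scale mult.assoc)

lemma s_coef_Suc:
  assumes "d \<ge> 1"
  shows "s_coef \<gamma> p q (Suc d) = s_coef \<gamma> p q d * pair \<gamma> (p + nscale (d - 1) q)"
proof (cases "d = 1")
  case True then show ?thesis by (simp add: s_coef_def)
next
  case False
  then obtain m where d: "d = Suc (Suc m)" using assms by (cases d; cases "d - 1") auto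
  have "s_coef \<gamma> p q (Suc d) = (\<Prod>i\<in>{0..Suc m}. pair \<gamma> (p + nscale i q))"
    unfolding d s_coef_def by simp
  also have "\<dots> = (\<Prod>i\<in>{0..m}. pair \<gamma> (p + nscale i q)) * pair \<gamma> (p + nscale (Suc m) q)"
    by (rule prod.atLeast0_atMost_Suc)
  also have "\<dots> = s_coef \<gamma> p q d * pair \<gamma> (p + nscale (d - 1) q)"
    unfolding d s_coef_def by simp
  finally show ?thesis .
qed

lemma funpow_step: "(F ^^ Suc n) x = F ((F ^^ n) x)"
  by simp

lemma vec_step:
  fixes p q :: "'n::finite \<Rightarrow>\<^sub>0 nat" and \<beta> \<gamma> :: "'n \<Rightarrow> 'a::field_char_0"
  shows "pair \<gamma> (p + nscale (Suc k) q) * (s * omega \<beta> \<gamma> p q (Suc k) j) -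
          pair (\<lambda>j. s * omega \<beta> \<gamma> p q (Suc k) j) q * \<gamma> j =
          (s * pair \<gamma> (p + nscale k q)) * omega \<beta> \<gamma> p q (Suc (Suc k)) j"
proof -
  define G where "G = pair \<gamma> p"
  define g where "g = pair \<gamma> q"
  define b where "b = pair \<beta> q"
  define D where "D = (of_nat k :: 'a)"
  have om: "omega \<beta> \<gamma> p q (Suc k) = (\<lambda>j. (G + D * g) * \<beta> j - ((D + 1) * b) * \<gamma> j)"
    unfolding omega_def G_def g_def b_def D_def by (simp add: pair_add pair_nscale algebra_simps)
  have om2: "omega \<beta> \<gamma> p q (Suc (Suc k)) j = (G + (D + 1) * g) * \<beta> j - (D + 2) * b * \<gamma> j"
    unfolding omega_def G_def g_def b_def D_def by (simp add: pair_add pair_nscale algebra_simps)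
  have po: "pair (\<lambda>j. s * ((G + D * g) * \<beta> j - ((D + 1) * b) * \<gamma> j)) q
       = s * ((G + D * g) * b - (D + 1) * b * g)"
    unfolding pair_scale pair_lin b_def g_def ..
  have pc: "pair \<gamma> (p + nscale (Suc k) q) = G + (D + 1) * g"
    unfolding G_def g_def D_def by (simp add: pair_add pair_nscale algebra_simps)
  have pk: "pair \<gamma> (p + nscale k q) = G + D * g"
    unfolding G_def g_def D_def by (simp add: pair_add pair_nscale)
  have alg: "(G + (D+1)*g) * (s * ((G + D*g)*bj - ((D+1)*b)*cj)) - s*((G + D*g)*b - (D+1)*b*g)*cj
       = (s*(G+D*g)) * ((G+(D+1)*g)*bj - (D+2)*b*cj)" for bj cj :: 'a
    by (simp add: algebra_simps)
  show ?thesis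
    unfolding om om2 po pc pk by (rule alg)
qed

lemma main:
  fixes p q :: "'n::finite \<Rightarrow>\<^sub>0 nat" and \<beta> \<gamma> :: "'n \<Rightarrow> 'a::field_char_0"
  shows "(ad (Delta q \<gamma>) ^^ Suc k) (Delta p \<beta>)
     = Delta (p + nscale (Suc k) q) (\<lambda>j. s_coef \<gamma> p q (Suc k) * omega \<beta> \<gamma> p q (Suc k) j)"
proof (induction k)
  case 0
  show ?case
    by (simp add: ad_step s_coef_def omega_def nscale_0 nscale_1)
next
  case (Suc k)
  have ns: "p + nscale (Suc k) q + q = p + nscale (Suc (Suc k)) q"
    by (simp add: poly_mapping_eq_iff fun_eq_iff lookup_add lookup_nscale)
  have sS: "s_coef \<gamma> p q (Suc (Suc k)) = s_coef \<gamma> p q (Suc k) * pair \<gamma> (p + nscale k q)"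
    using s_coef_Suc[of "Suc k" \<gamma> p q] by simp
  have "(ad (Delta q \<gamma>) ^^ Suc (Suc k)) (Delta p \<beta>)
     = ad (Delta q \<gamma>) ((ad (Delta q \<gamma>) ^^ Suc k) (Delta p \<beta>))"
    by (rule funpow_step)
  also have "\<dots> = ad (Delta q \<gamma>) (Delta (p + nscale (Suc k) q) (\<lambda>j. s_coef \<gamma> p q (Suc k) * omega \<beta> \<gamma> p q (Suc k) j))"
    unfolding Suc ..
  also have "\<dots> = Delta (p + nscale (Suc (Suc k)) q) (\<lambda>j. s_coef \<gamma> p q (Suc (Suc k)) * omega \<beta> \<gamma> p q (Suc (Suc k)) j)"
    unfolding ad_step ns sS vec_step ..
  finally show ?case .
qed

theorem lemma8:
  fixes p q :: "'n::finite \<Rightarrow>\<^sub>0 nat" and \<beta> \<gamma> :: "'n \<Rightarrow> 'a::field_char_0" and d :: nat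
  assumes "d \<ge> 1"
  shows "(ad (Delta q \<gamma>) ^^ d) (Delta p \<beta>)
       = (\<lambda>f. const_mp (s_coef \<gamma> p q d) * Delta (p + nscale d q) (omega \<beta> \<gamma> p q d) f)"
proof -
  obtain k where d: "d = Suc k" using assms by (cases d) auto
  show ?thesis unfolding d main const_Delta ..
qed

end
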